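(* Let $\Omega\subset\mathbb{R}^d$ be a nonempty open bounded convex set, $U\subset\mathbb{R}^m$ compact, and $f:\overline\Omega\times U\to\mathbb{R}^d$ continuous, and assume that for every $x\in\partial\Omega$ there exists $u\in U$ with $f(x,u)\in\bigcup_{s>0}\frac1s(\Omega-x)$. Then there exists $h>0$ such that $U_t(x)\neq\emptyset$ for every $t\in(0,h]$ and every $x\in\overline\Omega$, where $U_t(x)=\{u\in U:\ x+tf(x,u)\in\Omega\}$.
   Context: $\frac1s(\Omega-x)=\{(z-x)/s:z\in\Omega\}$. *)

theory Defs
  imports "HOL-Analysis.Analysis"
begin

definition scaled_translate :: "real \<Rightarrow> 'a::real_vector set \<Rightarrow> 'a \<Rightarrow> 'a set" where
  "scaled_translate s \<Omega> x = (\<lambda>z. (1 / s) *\<^sub>R (z - x)) ` \<Omega>"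

definition admissible_controls ::
  "'a::real_vector set \<Rightarrow> 'b set \<Rightarrow> ('a \<Rightarrow> 'b \<Rightarrow> 'a) \<Rightarrow> real \<Rightarrow> 'a \<Rightarrow> 'b set" where
  "admissible_controls \<Omega> U f t x = {u \<in> U. x + t *\<^sub>R f x u \<in> \<Omega>}"

end

theory Submission
  imports Defs
begin

lemma shrink_in:
  fixes S :: "'a::euclidean_space set"
  assumes "convex S" "open S" "y \<in> S" "x \<in> closure S" "0 < l" "l \<le> 1"
  shows "x + l *\<^sub>R (y - x) \<in> S"
proof (cases "l = 1 \<or> x = y")
  case True
  then show ?thesis using assms by auto
next
  case False
  have "x + l *\<^sub>R (y - x) = (1 - l) *\<^sub>R x + l *\<^sub>R y" by (simp add: algebra_simps)
  moreover have "(1 - l) *\<^sub>R x + l *\<^sub>R y \<in> open_segment x y"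
    unfolding open_segment_def closed_segment_def using False assms(5,6)
    apply auto
    subgoal premises p proof -
      have "l *\<^sub>R (y - x) = 0" using p(5) by (simp add: algebra_simps)
      then show False using p by simp
    qed
    subgoal premises p proof -
      have "(1 - l) *\<^sub>R (x - y) = 0" using p(5) by (simp add: algebra_simps)
      then show False using p by simp
    qed
    done
  moreover have "open_segment y x \<subseteq> interior S"
    using in_interior_closure_convex_segment[OF assms(1)] assms interior_open by blast
  ultimately show ?thesis using assms(2) interior_open open_segment_commute by (metis in_mono)
qed

theorem corollary2p5:
  fixes \<Omega> :: "'d::euclidean_space set" and U :: "'m::euclidean_space set"
    and f :: "'d \<Rightarrow> 'm \<Rightarrow> 'd"
  assumes "\<Omega> \<noteq> {}" and "open \<Omega>" and "bounded \<Omega>" and "convex \<Omega>"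
    and "compact U"
    and "continuous_on (closure \<Omega> \<times> U) (\<lambda>(x, u). f x u)"
    and "\<forall>x\<in>frontier \<Omega>. \<exists>u\<in>U. f x u \<in> (\<Union>s\<in>{0<..}. scaled_translate s \<Omega> x)"
  shows "\<exists>h>0. \<forall>t\<in>{0<..h}. \<forall>x\<in>closure \<Omega>. admissible_controls \<Omega> U f t x \<noteq> {}"
proof -
  let ?C = "closure \<Omega>"
  have "\<Omega> \<noteq> UNIV" using assms(3) not_bounded_UNIV by blast
  then have "frontier \<Omega> \<noteq> {}" using frontier_not_empty assms(1) by blast
  then have Une: "U \<noteq> {}" using assms(7) by blast
  have step1: "\<exists>u\<in>U. \<exists>s>0. x0 + s *\<^sub>R f x0 u \<in> \<Omega>" if x0: "x0 \<in> ?C" for x0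
  proof (cases "x0 \<in> \<Omega>")
    case True
    obtain u where u: "u \<in> U" using Une by blast
    obtain e where e: "e > 0" "ball x0 e \<subseteq> \<Omega>" using open_contains_ball True assms(2) by blast
    define s where "s = e / (norm (f x0 u) + 1)"
    have sp: "s > 0" unfolding s_def using e by (intro divide_pos_pos) (auto intro: add_nonneg_pos)
    have "s * norm (f x0 u) < s * (norm (f x0 u) + 1)" using sp by simp
    also have "\<dots> = e" unfolding s_def by (smt (verit) norm_ge_zero nonzero_eq_divide_eq)
    finally have "norm (s *\<^sub>R f x0 u) < e" using sp by simp
    then have "x0 + s *\<^sub>R f x0 u \<in> ball x0 e" by (simp add: dist_norm)
    then show ?thesis using u sp e by blast
  next
    case False
    then have "x0 \<in> frontier \<Omega>" using x0 assms(2) by (simp add: frontier_def interior_open)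
    then obtain u s where u: "u \<in> U" "s > 0" "f x0 u \<in> scaled_translate s \<Omega> x0"
      using assms(7) by auto
    then obtain z where z: "z \<in> \<Omega>" "f x0 u = (1 / s) *\<^sub>R (z - x0)"
      unfolding scaled_translate_def by auto
    have "x0 + s *\<^sub>R f x0 u = z" using z(2) u(2) by simp
    then show ?thesis using u z by metis
  qed
  have step2: "\<exists>u s V. u \<in> U \<and> s > 0 \<and> open V \<and> x0 \<in> V \<and> (\<forall>x\<in>?C \<inter> V. x + s *\<^sub>R f x u \<in> \<Omega>)"
    if x0: "x0 \<in> ?C" for x0
  proof -
    obtain u s where us: "u \<in> U" "s > 0" "x0 + s *\<^sub>R f x0 u \<in> \<Omega>" using step1[OF x0] by blast
    have "continuous_on ?C (\<lambda>x. (\<lambda>(x, u). f x u) (x, u))"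
      by (rule continuous_on_compose2[OF assms(6)]) (auto intro!: continuous_intros simp: us(1))
    then have "continuous_on ?C (\<lambda>x. x + s *\<^sub>R f x u)"
      by (auto intro!: continuous_intros)
    then obtain A where A: "open A" "A \<inter> ?C = (\<lambda>x. x + s *\<^sub>R f x u) -` \<Omega> \<inter> ?C"
      using continuous_on_open_invariant assms(2) by metis
    have "x0 \<in> A" using A(2) us(3) x0 by blast
    moreover have "\<forall>x\<in>?C \<inter> A. x + s *\<^sub>R f x u \<in> \<Omega>" using A(2) by blast
    ultimately show ?thesis using us A(1) by blast
  qed
  obtain uf sf Vf where ch: "\<And>x0. x0 \<in> ?C \<Longrightarrow> uf x0 \<in> U \<and> sf x0 > 0 \<and> open (Vf x0) \<and> x0 \<in> Vf x0
      \<and> (\<forall>x\<in>?C \<inter> Vf x0. x + sf x0 *\<^sub>R f x (uf x0) \<in> \<Omega>)"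
    using step2 by metis
  have cC: "compact ?C" using assms(3) by (simp add: compact_closure)
  obtain T where T: "T \<subseteq> ?C" "finite T" "?C \<subseteq> (\<Union>c\<in>T. Vf c)"
    by (rule compactE_image[OF cC, of ?C Vf]) (use ch in auto)
  have "T \<noteq> {}" using T(3) assms(1) closure_subset by blast
  define h where "h = Min (sf ` T)"
  have hpos: "h > 0" unfolding h_def using T ch \<open>T \<noteq> {}\<close> by (auto simp: Min_gr_iff)
  have "admissible_controls \<Omega> U f t x \<noteq> {}" if t: "t \<in> {0<..h}" and x: "x \<in> ?C" for t x
  proof -
    obtain c where c: "c \<in> T" "x \<in> Vf c" using T(3) x by blast
    have cC': "c \<in> ?C" using c T(1) by blast
    have "h \<le> sf c" unfolding h_def using c T(2) by auto
    then have ts: "0 < t" "t \<le> sf c" using t by auto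
    have sc: "sf c > 0" using ch[OF cC'] by blast
    have y: "x + sf c *\<^sub>R f x (uf c) \<in> \<Omega>" using ch[OF cC'] c x by blast
    have "x + (t / sf c) *\<^sub>R ((x + sf c *\<^sub>R f x (uf c)) - x) \<in> \<Omega>"
      by (rule shrink_in[OF assms(4) assms(2) y x]) (use ts sc in auto)
    then have "x + t *\<^sub>R f x (uf c) \<in> \<Omega>" using sc by simp
    then have "uf c \<in> admissible_controls \<Omega> U f t x"
      unfolding admissible_controls_def using ch[OF cC'] by blast
    then show ?thesis by blast
  qed
  then show ?thesis using hpos by blast
qed

end
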